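(* Let $X=(X_1,\ldots,X_n)$ be a real random vector with finite support, $Q=[q_{ij}]\in\mathbb{R}^{m\times n}$ and $\tilde X=QX\in\mathbb{R}^m$. For each $d\ge1$ let $L_d$ be a partition lattice of $[d]$ with Möbius function $\mathfrak{m}_d$, and define the $n\times\cdots\times n$ tensor $$\mathcal{L}^{(d)}_{i_1\cdots i_d}=\sum_{\pi\in L_d}\mathfrak{m}_d(\pi,[d])\prod_{B\in\pi}\mathbb{E}\Big[\prod_{b\in B}X_{i_b}\Big],\qquad (i_1,\ldots,i_d)\in[n]^d,$$ and analogously the $m\times\cdots\times m$ tensor $\tilde{\mathcal{L}}^{(d)}$ from $\tilde X$. Then for every $d\ge1$ and $i_1,\ldots,i_d\in[m]$, $$\tilde{\mathcal{L}}^{(d)}_{i_1\cdots i_d}=\sum_{j_1=1}^n\cdots\sum_{j_d=1}^n q_{i_1j_1}\cdots q_{i_dj_d}\,\mathcal{L}^{(d)}_{j_1\cdots j_d}.$$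
   Context: A partition lattice of $[d]$ is a subset of the set of set partitions of $[d]$ containing the one-block partition $[d]$ and the finest partition $1|\cdots|d$ which is a lattice under the refinement order. The Möbius function of a finite poset is given by $\mathfrak{m}(\pi,\pi)=1$, $\mathfrak{m}(\pi,\nu)=-\sum_{\pi\le\delta<\nu}\mathfrak{m}(\pi,\delta)$ for $\pi<\nu$, $0$ otherwise. *)

theory Defs
  imports "HOL-Probability.Probability" "HOL-Library.Disjoint_Sets"
begin

definition set_partitions :: "nat \<Rightarrow> nat set set set" where
  "set_partitions d = {P. partition_on {1..d} P}"

definition refines :: "nat set set \<Rightarrow> nat set set \<Rightarrow> bool" where
  "refines P R \<longleftrightarrow> (\<forall>B\<in>P. \<exists>C\<in>R. B \<subseteq> C)"

definition is_lub_in :: "nat set set set \<Rightarrow> nat set set \<Rightarrow> nat set set \<Rightarrow> nat set set \<Rightarrow> bool" where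
  "is_lub_in L a b c \<longleftrightarrow> c \<in> L \<and> refines a c \<and> refines b c \<and>
     (\<forall>z\<in>L. refines a z \<and> refines b z \<longrightarrow> refines c z)"

definition is_glb_in :: "nat set set set \<Rightarrow> nat set set \<Rightarrow> nat set set \<Rightarrow> nat set set \<Rightarrow> bool" where
  "is_glb_in L a b c \<longleftrightarrow> c \<in> L \<and> refines c a \<and> refines c b \<and>
     (\<forall>z\<in>L. refines z a \<and> refines z b \<longrightarrow> refines z c)"

definition partition_lattice :: "nat \<Rightarrow> nat set set set \<Rightarrow> bool" where
  "partition_lattice d L \<longleftrightarrow>
     L \<subseteq> set_partitions d \<and>
     {{1..d}} \<in> L \<and>
     (\<lambda>i. {i}) ` {1..d} \<in> L \<and>
     (\<forall>a\<in>L. \<forall>b\<in>L. (\<exists>c. is_lub_in L a b c) \<and> (\<exists>c. is_glb_in L a b c))"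

text \<open>Recursion depth is bounded by the length of a strict chain, so fuel card L + 1 suffices.\<close>
fun mobius_aux :: "nat \<Rightarrow> nat set set set \<Rightarrow> nat set set \<Rightarrow> nat set set \<Rightarrow> real" where
  "mobius_aux 0 L p v = 0"
| "mobius_aux (Suc k) L p v =
     (if p = v then 1
      else if refines p v then
        - (\<Sum>d\<in>{d\<in>L. refines p d \<and> refines d v \<and> d \<noteq> v}. mobius_aux k L p d)
      else 0)"

definition mobius :: "nat set set set \<Rightarrow> nat set set \<Rightarrow> nat set set \<Rightarrow> real" where
  "mobius L p v = mobius_aux (Suc (card L)) L p v"

definition cumulant_tensor ::
  "(nat \<Rightarrow> nat set set set) \<Rightarrow> (nat \<Rightarrow> real) pmf \<Rightarrow> nat \<Rightarrow> (nat \<Rightarrow> nat) \<Rightarrow> real" where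
  "cumulant_tensor L p d i =
     (\<Sum>\<pi>\<in>L d. mobius (L d) \<pi> {{1..d}} *
        (\<Prod>B\<in>\<pi>. measure_pmf.expectation p (\<lambda>x. \<Prod>b\<in>B. x (i b))))"

definition lin_transform :: "nat \<Rightarrow> (nat \<Rightarrow> nat \<Rightarrow> real) \<Rightarrow> (nat \<Rightarrow> real) \<Rightarrow> (nat \<Rightarrow> real)" where
  "lin_transform n Q x = (\<lambda>i. \<Sum>j=1..n. Q i j * x j)"

end

theory Submission
  imports Defs
begin

lemma part_unique:
  assumes P: "partition_on D P" and "B \<in> P" "b \<in> B" "C \<in> P" "b \<in> C"
  shows "B = C"
proof -
  have "disjoint P" using P by (rule partition_onD2)
  then show ?thesis using assms(2-5) unfolding disjoint_def by blast
qed

lemma blk_ex: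
  assumes P: "partition_on D P" and b: "b \<in> D"
  shows "\<exists>!B. B \<in> P \<and> b \<in> B"
proof -
  have "b \<in> \<Union>P" using partition_onD1[OF P] b by simp
  then obtain B where "B \<in> P" "b \<in> B" by blast
  then show ?thesis using part_unique[OF P] by blast
qed

lemma blk_props:
  assumes P: "partition_on D P" and b: "b \<in> D"
  shows "(THE B. B \<in> P \<and> b \<in> B) \<in> P \<and> b \<in> (THE B. B \<in> P \<and> b \<in> B)"
  using theI'[OF blk_ex[OF P b]] .

lemma blk_eq:
  assumes P: "partition_on D P" and B: "B \<in> P" and b: "b \<in> B"
  shows "(THE B. B \<in> P \<and> b \<in> B) = B"
proof -
  have "b \<in> D" using partition_onD1[OF P] B b by blast
  show ?thesis using the1_equality[OF blk_ex[OF P \<open>b \<in> D\<close>]] B b by blast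
qed
lemma prod_sum_partition:
  fixes c :: "nat set \<Rightarrow> (nat \<Rightarrow> nat) \<Rightarrow> real"
  assumes P: "partition_on D P" and fD: "finite D" and fN: "finite N"
  shows "(\<Prod>B\<in>P. \<Sum>g\<in>PiE B (\<lambda>_. N). c B g) =
         (\<Sum>j\<in>PiE D (\<lambda>_. N). \<Prod>B\<in>P. c B (restrict j B))"
proof -
  have fP: "finite P" using finite_elements[OF fD P] .
  have fB: "\<And>B. B \<in> P \<Longrightarrow> finite B"
    using P fD partition_onD1 by (metis Union_upper finite_subset)
  have sub: "\<And>B. B \<in> P \<Longrightarrow> B \<subseteq> D" using P unfolding partition_on_def by blast
  let ?blk = "\<lambda>b. (THE B. B \<in> P \<and> b \<in> B)"
  have "(\<Prod>B\<in>P. \<Sum>g\<in>PiE B (\<lambda>_. N). c B g) =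
        (\<Sum>G\<in>PiE P (\<lambda>B. PiE B (\<lambda>_. N)). \<Prod>B\<in>P. c B (G B))"
    by (rule prod_sum_PiE) (use fP fB fN in \<open>auto intro: finite_PiE\<close>)
  also have "\<dots> = (\<Sum>j\<in>PiE D (\<lambda>_. N). \<Prod>B\<in>P. c B (restrict j B))"
  proof (rule sum.reindex_bij_witness[where j="\<lambda>G. \<lambda>b\<in>D. G (?blk b) b"
        and i="\<lambda>j. \<lambda>B\<in>P. restrict j B"])
    have key: "restrict (\<lambda>b\<in>D. G (?blk b) b) B = G B"
      if G: "G \<in> PiE P (\<lambda>B. PiE B (\<lambda>_. N))" and B: "B \<in> P" for G B
    proof
      fix b show "restrict (\<lambda>b\<in>D. G (?blk b) b) B b = G B b"
      proof (cases "b \<in> B")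
        case True
        then show ?thesis using blk_eq[OF P B True] sub[OF B] by auto
      next
        case False
        have "G B \<in> PiE B (\<lambda>_. N)" using PiE_mem[OF G B] .
        then have "G B b = undefined" using False by (rule PiE_arb)
        then show ?thesis using False by simp
      qed
    qed
    fix G assume G: "G \<in> PiE P (\<lambda>B. PiE B (\<lambda>_. N))"
    show "(\<lambda>B\<in>P. restrict (\<lambda>b\<in>D. G (?blk b) b) B) = G"
    proof
      fix B show "(\<lambda>B\<in>P. restrict (\<lambda>b\<in>D. G (?blk b) b) B) B = G B"
      proof (cases "B \<in> P")
        case True then show ?thesis using key[OF G True] by simp
      next
        case False then have "G B = undefined" using G by (rule PiE_arb[rotated])
        then show ?thesis using False by simp
      qed
    qed
    show "(\<lambda>b\<in>D. G (?blk b) b) \<in> PiE D (\<lambda>_. N)"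
    proof
      fix b assume "b \<in> D"
      then have b1: "?blk b \<in> P" and b2: "b \<in> ?blk b" using blk_props[OF P] by auto
      show "(\<lambda>b\<in>D. G (?blk b) b) b \<in> N" using PiE_mem[OF PiE_mem[OF G b1] b2] \<open>b \<in> D\<close> by simp
    qed auto
    show "(\<Prod>B\<in>P. c B (restrict (\<lambda>b\<in>D. G (?blk b) b) B)) = (\<Prod>B\<in>P. c B (G B))"
      using key[OF G] by simp
  next
    fix j assume j: "j \<in> PiE D (\<lambda>_. N)"
    show "(\<lambda>b\<in>D. (\<lambda>B\<in>P. restrict j B) (?blk b) b) = j"
    proof
      fix b show "(\<lambda>b\<in>D. (\<lambda>B\<in>P. restrict j B) (?blk b) b) b = j b"
      proof (cases "b \<in> D")
        case True then show ?thesis using blk_props[OF P True] by simp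
      next
        case False then have "j b = undefined" using j by (rule PiE_arb[rotated])
        then show ?thesis using False by simp
      qed
    qed
    show "(\<lambda>B\<in>P. restrict j B) \<in> PiE P (\<lambda>B. PiE B (\<lambda>_. N))"
    proof
      fix B assume B: "B \<in> P"
      have "restrict j B \<in> PiE B (\<lambda>_. N)"
      proof
        fix b assume "b \<in> B" then show "restrict j B b \<in> N" using PiE_mem[OF j] sub[OF B] by auto
      qed simp
      then show "(\<lambda>B\<in>P. restrict j B) B \<in> PiE B (\<lambda>_. N)" using B by simp
    qed simp
  qed
  finally show ?thesis .
qed

lemma expect_transform:
  fixes p :: "(nat \<Rightarrow> real) pmf"
  assumes fin: "finite (set_pmf p)" and fB: "finite B"
  shows "measure_pmf.expectation (map_pmf (lin_transform n Q) p) (\<lambda>x. \<Prod>b\<in>B. x (i b)) =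
    (\<Sum>g\<in>PiE B (\<lambda>_. {1..n}). (\<Prod>b\<in>B. Q (i b) (g b)) *
        measure_pmf.expectation p (\<lambda>x. \<Prod>b\<in>B. x (g b)))"
proof -
  have "measure_pmf.expectation (map_pmf (lin_transform n Q) p) (\<lambda>x. \<Prod>b\<in>B. x (i b)) =
     measure_pmf.expectation p (\<lambda>x. \<Prod>b\<in>B. \<Sum>k=1..n. Q (i b) k * x k)"
    by (simp add: lin_transform_def)
  also have "(\<lambda>x. \<Prod>b\<in>B. \<Sum>k=1..n. Q (i b) k * x k) =
     (\<lambda>x. \<Sum>g\<in>PiE B (\<lambda>_. {1..n}). (\<Prod>b\<in>B. Q (i b) (g b)) * (\<Prod>b\<in>B. x (g b)))"
    by (rule ext, subst prod_sum_PiE) (use fB in \<open>auto simp: prod.distrib\<close>)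
  also have "measure_pmf.expectation p \<dots> =
     (\<Sum>g\<in>PiE B (\<lambda>_. {1..n}). measure_pmf.expectation p
         (\<lambda>x. (\<Prod>b\<in>B. Q (i b) (g b)) * (\<Prod>b\<in>B. x (g b))))"
    by (rule Bochner_Integration.integral_sum[where f="\<lambda>g x. (\<Prod>b\<in>B. Q (i b) (g b)) * (\<Prod>b\<in>B. x (g b))"])
       (rule integrable_measure_pmf_finite[OF fin])
  also have "\<dots> = (\<Sum>g\<in>PiE B (\<lambda>_. {1..n}). (\<Prod>b\<in>B. Q (i b) (g b)) *
        measure_pmf.expectation p (\<lambda>x. \<Prod>b\<in>B. x (g b)))"
    by simp
  finally show ?thesis .
qed

theorem proposition5p7:
  fixes p :: "(nat \<Rightarrow> real) pmf" and n m :: nat and Q :: "nat \<Rightarrow> nat \<Rightarrow> real"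
    and L :: "nat \<Rightarrow> nat set set set" and d :: nat and i :: "nat \<Rightarrow> nat"
  assumes "finite (set_pmf p)"
    and "\<And>d'. d' \<ge> 1 \<Longrightarrow> partition_lattice d' (L d')"
    and "d \<ge> 1"
    and "\<forall>b\<in>{1..d}. i b \<in> {1..m}"
  shows "cumulant_tensor L (map_pmf (lin_transform n Q) p) d i =
    (\<Sum>j\<in>PiE {1..d} (\<lambda>_. {1..n}). (\<Prod>b\<in>{1..d}. Q (i b) (j b)) * cumulant_tensor L p d j)"
proof -
  let ?S = "PiE {1..d} (\<lambda>_. {1..n})"
  let ?E = "\<lambda>j B. measure_pmf.expectation p (\<lambda>x. \<Prod>b\<in>B. x (j b))"
  have Lsub: "L d \<subseteq> set_partitions d" using assms(2)[OF assms(3)]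
    unfolding partition_lattice_def by blast
  have part: "\<And>\<pi>. \<pi> \<in> L d \<Longrightarrow> partition_on {1..d} \<pi>"
    using Lsub unfolding set_partitions_def by blast
  have finL: "finite (L d)"
  proof (rule finite_subset[of _ "Pow (Pow {1..d})"])
    show "L d \<subseteq> Pow (Pow {1..d})" using part unfolding partition_on_def by blast
  qed simp
  have step: "(\<Prod>B\<in>\<pi>. measure_pmf.expectation (map_pmf (lin_transform n Q) p)
                   (\<lambda>x. \<Prod>b\<in>B. x (i b))) =
        (\<Sum>j\<in>?S. (\<Prod>b\<in>{1..d}. Q (i b) (j b)) * (\<Prod>B\<in>\<pi>. ?E j B))"
    if pi: "\<pi> \<in> L d" for \<pi>
  proof -
    have P: "partition_on {1..d} \<pi>" using part[OF pi] .
    have fB: "\<And>B. B \<in> \<pi> \<Longrightarrow> finite B"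
      using P partition_onD1 by (metis Union_upper finite_atLeastAtMost finite_subset)
    have fP: "finite \<pi>" using finite_elements[OF _ P] by simp
    have "(\<Prod>B\<in>\<pi>. measure_pmf.expectation (map_pmf (lin_transform n Q) p)
                   (\<lambda>x. \<Prod>b\<in>B. x (i b))) =
       (\<Prod>B\<in>\<pi>. \<Sum>g\<in>PiE B (\<lambda>_. {1..n}). (\<Prod>b\<in>B. Q (i b) (g b)) * ?E g B)"
      by (rule prod.cong[OF refl], rule expect_transform[OF assms(1) fB])
    also have "\<dots> = (\<Sum>j\<in>?S. \<Prod>B\<in>\<pi>. (\<Prod>b\<in>B. Q (i b) (restrict j B b)) * ?E (restrict j B) B)"
      by (rule prod_sum_partition[OF P]) auto
    also have "\<dots> = (\<Sum>j\<in>?S. \<Prod>B\<in>\<pi>. (\<Prod>b\<in>B. Q (i b) (j b)) * ?E j B)"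
      by (intro sum.cong refl prod.cong arg_cong2[where f="(*)"]) auto
    also have "\<dots> = (\<Sum>j\<in>?S. (\<Prod>B\<in>\<pi>. \<Prod>b\<in>B. Q (i b) (j b)) * (\<Prod>B\<in>\<pi>. ?E j B))"
      by (simp add: prod.distrib)
    also have "\<dots> = (\<Sum>j\<in>?S. (\<Prod>b\<in>{1..d}. Q (i b) (j b)) * (\<Prod>B\<in>\<pi>. ?E j B))"
    proof -
      have "(\<Prod>b\<in>\<Union>\<pi>. Q (i b) (j b)) = (\<Prod>B\<in>\<pi>. \<Prod>b\<in>B. Q (i b) (j b))" for j
        by (subst prod.Union_disjoint) (use fB P in \<open>auto simp: partition_on_def disjoint_def\<close>)
      moreover have "\<Union>\<pi> = {1..d}" using P unfolding partition_on_def by blast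
      ultimately show ?thesis by simp
    qed
    finally show ?thesis .
  qed
  have "cumulant_tensor L (map_pmf (lin_transform n Q) p) d i =
     (\<Sum>\<pi>\<in>L d. mobius (L d) \<pi> {{1..d}} *
        (\<Sum>j\<in>?S. (\<Prod>b\<in>{1..d}. Q (i b) (j b)) * (\<Prod>B\<in>\<pi>. ?E j B)))"
    unfolding cumulant_tensor_def using step by simp
  also have "\<dots> = (\<Sum>j\<in>?S. (\<Prod>b\<in>{1..d}. Q (i b) (j b)) *
        (\<Sum>\<pi>\<in>L d. mobius (L d) \<pi> {{1..d}} * (\<Prod>B\<in>\<pi>. ?E j B)))"
    by (simp add: sum_distrib_left sum_distrib_right mult_ac sum.swap[of _ "L d"])
  also have "\<dots> = (\<Sum>j\<in>?S. (\<Prod>b\<in>{1..d}. Q (i b) (j b)) * cumulant_tensor L p d j)"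
    unfolding cumulant_tensor_def by simp
  finally show ?thesis .
qed

end
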